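(* Consider a system with a finite set $S$ of tasks and minimum average reward requirements $q^*_X>0$ (as in the context), and a scheduling policy $\eta$ under which the evolution of the system state $D(k)=[d_X(k) : X\in S]$, $k=0,1,2,\dots$, is a Markov chain. If this Markov chain is irreducible and positive recurrent, then the system is fulfilled by $\eta$.
   Context: A system consists of a finite set $S$ of tasks. Time is slotted, $t\in\{0,1,2,\dots\}$. Each task $X\in S$ has a period $\tau_X$ (a positive integer); time is partitioned into consecutive periods of $X$ of $\tau_X$ slots each, the first starting at $t=0$, and in each period $X$ has one job, removed at the end of the period. Let $T=\mathrm{lcm}\{\tau_X : X\in S\}$; time is partitioned into consecutive frames of $T$ slots each, the $k$-th frame ($k=1,2,\dots$) being the $k$-th such block starting from $t=0$. A scheduling policy (possibly randomized) chooses in each slot either to idle or to execute the job of exactly one task. Each task $X$ has rewards $r^1_X\ge r^2_X\ge\dots\ge r^{\tau_X}_X\ge 0$: executing the job of $X$ for the $i$-th time within a period yields reward $r^i_X$ to $X$. Let $s_X(t)$ be the total reward obtained by $X$ between time 0 and $t$; the average reward is $q_X=\liminf_{t\to\infty}s_X(t)/(t/T)$. Each task has a requirement $q^*_X>0$; a policy fulfills the system if $q_X\ge q^*_X$ with probability 1 for all $X\in S$. Let $\tilde q_X(k)$ be the total reward obtained by $X$ during the $k$-th frame. The debt of $X$ is defined by $d_X(0)=0$ and $d_X(k)=[d_X(k-1)+q^*_X-\tilde q_X(k)]^+$ for $k>0$, where $[x]^+=\max\{x,0\}$. The state of the system at frame $k$ is the vector of debts $[d_X(k) : X\in S]$. 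*)

theory Defs
  imports "HOL-Probability.Probability"
begin

text \<open>A (realised) schedule is a function sg :: nat => 'x option: in slot t the job of
  task X is executed iff sg t = Some X, and the system idles iff sg t = None.
  Rewards r X i are indexed from i = 1 (the i-th execution within a period).\<close>

definition frame_len :: "'x set \<Rightarrow> ('x \<Rightarrow> nat) \<Rightarrow> nat" where
  "frame_len S tau = Lcm (tau ` S)"

definition exec_count :: "('x \<Rightarrow> nat) \<Rightarrow> (nat \<Rightarrow> 'x option) \<Rightarrow> 'x \<Rightarrow> nat \<Rightarrow> nat" where
  "exec_count tau sg X t =
     card {u. (t div tau X) * tau X \<le> u \<and> u \<le> t \<and> sg u = Some X}"

definition slot_reward ::
  "('x \<Rightarrow> nat) \<Rightarrow> ('x \<Rightarrow> nat \<Rightarrow> real) \<Rightarrow> (nat \<Rightarrow> 'x option) \<Rightarrow> 'x \<Rightarrow> nat \<Rightarrow> real" where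
  "slot_reward tau r sg X t =
     (if sg t = Some X then r X (exec_count tau sg X t) else 0)"

definition cum_reward ::
  "('x \<Rightarrow> nat) \<Rightarrow> ('x \<Rightarrow> nat \<Rightarrow> real) \<Rightarrow> (nat \<Rightarrow> 'x option) \<Rightarrow> 'x \<Rightarrow> nat \<Rightarrow> real" where
  "cum_reward tau r sg X t = (\<Sum>u<t. slot_reward tau r sg X u)"

definition frame_reward ::
  "'x set \<Rightarrow> ('x \<Rightarrow> nat) \<Rightarrow> ('x \<Rightarrow> nat \<Rightarrow> real) \<Rightarrow> (nat \<Rightarrow> 'x option) \<Rightarrow> 'x \<Rightarrow> nat \<Rightarrow> real" where
  "frame_reward S tau r sg X k =
     (\<Sum>u\<in>{(k - 1) * frame_len S tau..<k * frame_len S tau}. slot_reward tau r sg X u)"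

primrec debt ::
  "'x set \<Rightarrow> ('x \<Rightarrow> nat) \<Rightarrow> ('x \<Rightarrow> nat \<Rightarrow> real) \<Rightarrow> ('x \<Rightarrow> real) \<Rightarrow> (nat \<Rightarrow> 'x option)
     \<Rightarrow> 'x \<Rightarrow> nat \<Rightarrow> real" where
  "debt S tau r qs sg X 0 = 0"
| "debt S tau r qs sg X (Suc k) =
     max 0 (debt S tau r qs sg X k + qs X - frame_reward S tau r sg X (Suc k))"

definition sys_state ::
  "'x set \<Rightarrow> ('x \<Rightarrow> nat) \<Rightarrow> ('x \<Rightarrow> nat \<Rightarrow> real) \<Rightarrow> ('x \<Rightarrow> real) \<Rightarrow> (nat \<Rightarrow> 'x option)
     \<Rightarrow> nat \<Rightarrow> ('x \<Rightarrow> real)" where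
  "sys_state S tau r qs sg k = (\<lambda>X\<in>S. debt S tau r qs sg X k)"

definition avg_reward ::
  "'x set \<Rightarrow> ('x \<Rightarrow> nat) \<Rightarrow> ('x \<Rightarrow> nat \<Rightarrow> real) \<Rightarrow> (nat \<Rightarrow> 'x option) \<Rightarrow> 'x \<Rightarrow> ereal" where
  "avg_reward S tau r sg X =
     liminf (\<lambda>t. ereal (cum_reward tau r sg X t / (real t / real (frame_len S tau))))"

primrec nstep :: "('s \<Rightarrow> 's pmf) \<Rightarrow> nat \<Rightarrow> 's \<Rightarrow> 's pmf" where
  "nstep p 0 s = return_pmf s"
| "nstep p (Suc n) s = bind_pmf (nstep p n s) p"

definition markov_chain_with :: "'w measure \<Rightarrow> ('w \<Rightarrow> nat \<Rightarrow> 's) \<Rightarrow> ('s \<Rightarrow> 's pmf) \<Rightarrow> bool" where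
  "markov_chain_with M Z p \<longleftrightarrow>
     (\<forall>k xs y. length xs = Suc k \<longrightarrow>
        measure M {w\<in>space M. (\<forall>i\<le>k. Z w i = xs ! i) \<and> Z w (Suc k) = y}
        = measure M {w\<in>space M. \<forall>i\<le>k. Z w i = xs ! i} * pmf (p (last xs)) y)"

definition reachable_states :: "('s \<Rightarrow> 's pmf) \<Rightarrow> 's \<Rightarrow> 's set" where
  "reachable_states p s0 = {s. \<exists>n. s \<in> set_pmf (nstep p n s0)}"

definition irreducible_on :: "('s \<Rightarrow> 's pmf) \<Rightarrow> 's set \<Rightarrow> bool" where
  "irreducible_on p A \<longleftrightarrow> (\<forall>s\<in>A. \<forall>t\<in>A. \<exists>n. t \<in> set_pmf (nstep p n s))"

text \<open>first_passage p t n x: probability that the chain started at x hits t for the first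
  time (at a positive time) at step n.\<close>
fun first_passage :: "('s \<Rightarrow> 's pmf) \<Rightarrow> 's \<Rightarrow> nat \<Rightarrow> 's \<Rightarrow> real" where
  "first_passage p t 0 x = 0"
| "first_passage p t (Suc 0) x = pmf (p x) t"
| "first_passage p t (Suc (Suc n)) x =
     measure_pmf.expectation (p x) (\<lambda>y. if y = t then 0 else first_passage p t (Suc n) y)"

definition positive_recurrent :: "('s \<Rightarrow> 's pmf) \<Rightarrow> 's \<Rightarrow> bool" where
  "positive_recurrent p s \<longleftrightarrow>
     summable (\<lambda>n. first_passage p s n s) \<and> (\<Sum>n. first_passage p s n s) = 1 \<and>
     summable (\<lambda>n. real n * first_passage p s n s)"

definition positive_recurrent_on :: "('s \<Rightarrow> 's pmf) \<Rightarrow> 's set \<Rightarrow> bool" where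
  "positive_recurrent_on p A \<longleftrightarrow> (\<forall>s\<in>A. positive_recurrent p s)"

end

theory Submission
  imports Defs
begin


lemma measure_bind_pmf_eq:
  "measure_pmf.prob (bind_pmf N f) A = (\<integral>x. measure_pmf.prob (f x) A \<partial>measure_pmf N)"
  using measurable_measure_pmf[of f]
  unfolding measure_pmf_bind
  by (subst measure_pmf.measure_bind[where N="count_space UNIV"]) auto

primrec walk :: "('s \<Rightarrow> 's pmf) \<Rightarrow> nat \<Rightarrow> 's \<Rightarrow> 's list pmf" where
  "walk p 0 x = return_pmf []"
| "walk p (Suc m) x = bind_pmf (p x) (\<lambda>y. map_pmf (\<lambda>ys. y # ys) (walk p m y))"

lemma walk_add:
  "walk p (a + b) x = bind_pmf (walk p a x) (\<lambda>ys. map_pmf (\<lambda>zs. ys @ zs) (walk p b (last (x # ys))))"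
proof (induction a arbitrary: x)
  case 0
  have "((@) []) = (\<lambda>x::'a list. x)" by auto
  then show ?case by (simp add: bind_return_pmf map_pmf_ident)
next
  case (Suc a)
  show ?case
    apply (simp add: Suc map_bind_pmf bind_map_pmf bind_assoc_pmf map_pmf_comp)
    apply (intro bind_pmf_cong refl map_pmf_cong)
    by auto
qed

lemma walk_length: "ys \<in> set_pmf (walk p m x) \<Longrightarrow> length ys = m"
  by (induction m arbitrary: x ys) auto



lemma pmf_integrable_bdd:
  fixes f :: "'a \<Rightarrow> real"
  assumes "\<And>x. \<bar>f x\<bar> \<le> B" shows "integrable (measure_pmf N) f"
  by (rule measure_pmf.integrable_const_bound[where B=B]) (auto simp: assms)

lemma fp_bounds: "0 \<le> first_passage p t n x \<and> first_passage p t n x \<le> 1"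
proof (induction p t n x rule: first_passage.induct)
  case (1 p t x) then show ?case by simp
next
  case (2 p t x) then show ?case by (simp add: pmf_le_1)
next
  case (3 p t n x)
  let ?f = "\<lambda>y. if y = t then 0 else first_passage p t (Suc n) y"
  have b: "\<And>y. 0 \<le> ?f y \<and> ?f y \<le> 1" using 3 by auto
  have int: "integrable (measure_pmf (p x)) ?f"
    by (rule pmf_integrable_bdd[where B=1]) (use b in auto)
  have "measure_pmf.expectation (p x) ?f \<le> measure_pmf.expectation (p x) (\<lambda>_. 1)"
    by (rule integral_mono[OF int]) (use b in auto)
  moreover have "0 \<le> measure_pmf.expectation (p x) ?f"
    by (rule integral_nonneg_AE) (use b in auto)
  ultimately show ?case by simp
qed

lemma fp_abs: "\<bar>first_passage p t n x\<bar> \<le> 1"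
  using fp_bounds[of p t n x] by (simp add: abs_le_iff)

lemma fp_Suc: "first_passage p t (Suc n) x =
   (if n = 0 then pmf (p x) t else 0) + (\<integral>y. (if y = t then 0 else first_passage p t n y) \<partial>measure_pmf (p x))"
proof (cases n)
  case 0
  have "(\<lambda>y. if y = t then 0 else first_passage p t 0 y) = (\<lambda>_. 0)"
    by (simp add: fun_eq_iff)
  then show ?thesis unfolding 0 by simp
next
  case (Suc k) then show ?thesis unfolding Suc by simp
qed

lemma avoid_walk:
  "measure_pmf.prob (walk p m x) {zs. \<forall>i<m. zs!i \<noteq> t} = 1 - (\<Sum>n<Suc m. first_passage p t n x)"
proof (induction m arbitrary: x)
  case 0
  then show ?case by simp
next
  case (Suc m)
  define G where "G y = (\<Sum>n<Suc m. first_passage p t n y)" for y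
  have Gb: "0 \<le> G y \<and> G y \<le> 1" for y
  proof -
    have "G y = 1 - measure_pmf.prob (walk p m y) {zs. \<forall>i<m. zs!i \<noteq> t}"
      using Suc[of y] unfolding G_def by simp
    moreover have "measure_pmf.prob (walk p m y) {zs. \<forall>i<m. zs!i \<noteq> t} \<le> 1"
      by (rule measure_pmf.prob_le_1)
    moreover have "0 \<le> measure_pmf.prob (walk p m y) {zs. \<forall>i<m. zs!i \<noteq> t}"
      by (rule measure_nonneg)
    ultimately show ?thesis by linarith
  qed
  have pre: "(\<lambda>ys. y # ys) -` {zs. \<forall>i<Suc m. zs ! i \<noteq> t} =
      (if y = t then {} else {zs. \<forall>i<m. zs!i \<noteq> t})" for y
    by (auto simp: less_Suc_eq_0_disj)
  have "measure_pmf.prob (walk p (Suc m) x) {zs. \<forall>i<Suc m. zs!i \<noteq> t}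
      = (\<integral>y. (if y = t then 0 else 1 - G y) \<partial>measure_pmf (p x))"
    unfolding walk.simps measure_bind_pmf_eq measure_map_pmf pre
    by (intro Bochner_Integration.integral_cong refl) (auto simp: Suc G_def simp del: measure_pmf.prob_space)
  also have "\<dots> = (\<integral>y. (1 - indicator {t} y) - (if y = t then 0 else G y) \<partial>measure_pmf (p x))"
    by (intro Bochner_Integration.integral_cong refl) auto
  also have "\<dots> = (\<integral>y. (1 - indicator {t} y) \<partial>measure_pmf (p x)) - (\<integral>y. (if y = t then 0 else G y) \<partial>measure_pmf (p x))"
    by (intro Bochner_Integration.integral_diff pmf_integrable_bdd[where B=1]) (use Gb in auto)
  also have "(\<integral>y. (1 - indicator {t} y) \<partial>measure_pmf (p x)) = 1 - pmf (p x) t"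
    by (subst Bochner_Integration.integral_diff) (auto simp: measure_pmf_single intro!: pmf_integrable_bdd[where B=1])
  also have "(\<integral>y. (if y = t then 0 else G y) \<partial>measure_pmf (p x)) =
      (\<Sum>n<Suc m. (\<integral>y. (if y = t then 0 else first_passage p t n y) \<partial>measure_pmf (p x)))"
    unfolding G_def
    apply (subst Bochner_Integration.integral_sum[symmetric])
     apply (rule pmf_integrable_bdd[where B=1]) apply (simp add: fp_abs)
    by (intro Bochner_Integration.integral_cong refl) auto
  finally have L: "measure_pmf.prob (walk p (Suc m) x) {zs. \<forall>i<Suc m. zs!i \<noteq> t} = 
     1 - pmf (p x) t - (\<Sum>n<Suc m. (\<integral>y. (if y = t then 0 else first_passage p t n y) \<partial>measure_pmf (p x)))" .
  have "(\<Sum>n<Suc (Suc m). first_passage p t n x) =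
      (\<Sum>n<Suc m. first_passage p t (Suc n) x)"
    by (subst sum.lessThan_Suc_shift) simp
  also have "\<dots> = pmf (p x) t + (\<Sum>n<Suc m. (\<integral>y. (if y = t then 0 else first_passage p t n y) \<partial>measure_pmf (p x)))"
    unfolding fp_Suc sum.distrib by (simp add: sum.lessThan_Suc_shift)
  finally show ?case using L by simp
qed



lemma sum_div_group:
  fixes f :: "nat \<Rightarrow> real"
  assumes "N > 0"
  shows "(\<Sum>j<M*N. f (j div N)) = real N * (\<Sum>m<M. f m)"
proof -
  have "(\<Sum>j<M*N. f (j div N)) = (\<Sum>m<M. \<Sum>j\<in>{m*N..<m*N+N}. f (j div N))"
    by (rule sum.nat_group[symmetric])
  also have "\<dots> = (\<Sum>m<M. real N * f m)"
  proof (rule sum.cong[OF refl])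
    fix m assume "m \<in> {..<M}"
    have "(\<Sum>j\<in>{m*N..<m*N+N}. f (j div N)) = (\<Sum>j\<in>{m*N..<m*N+N}. f m)"
    proof (rule sum.cong[OF refl])
      fix j assume "j \<in> {m*N..<m*N+N}"
      then have "m * N \<le> j" "j < Suc m * N" by auto
      then have "j div N = m" using assms
        by (intro div_nat_eqI) (auto simp: algebra_simps)
      then show "f (j div N) = f m" by simp
    qed
    then show "(\<Sum>j\<in>{m*N..<m*N+N}. f (j div N)) = real N * f m" by simp
  qed
  finally show ?thesis by (simp add: sum_distrib_left)
qed

locale pr_setup =
  fixes F :: "nat \<Rightarrow> real"
  assumes Fnn: "\<And>n. 0 \<le> F n"
    and F0: "F 0 = 0"
    and sF: "summable F" and sF1: "(\<Sum>n. F n) = 1"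
    and snF: "summable (\<lambda>n. real n * F n)"
begin

definition Tl :: "nat \<Rightarrow> real" where "Tl m = 1 - (\<Sum>n<Suc m. F n)"

lemma Tl_tail: "Tl m = (\<Sum>k. F (k + Suc m))"
  using suminf_split_initial_segment[OF sF, of "Suc m"] sF1 unfolding Tl_def by simp

lemma Tl_nonneg: "0 \<le> Tl m"
  unfolding Tl_tail
  by (rule suminf_nonneg) (use summable_ignore_initial_segment[OF sF, of "Suc m"] Fnn in auto)

lemma Tl_lim: "Tl \<longlonglongrightarrow> 0"
proof -
  have "(\<lambda>m. \<Sum>n<m. F n) \<longlonglongrightarrow> 1"
    using summable_LIMSEQ[OF sF] sF1 by simp
  then have "(\<lambda>m. \<Sum>n<Suc m. F n) \<longlonglongrightarrow> 1"
    by (rule LIMSEQ_Suc)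
  then have "(\<lambda>m. 1 - (\<Sum>n<Suc m. F n)) \<longlonglongrightarrow> 1 - 1"
    by (intro tendsto_diff tendsto_const)
  then show ?thesis unfolding Tl_def by simp
qed

lemma Tl_partial: "(\<Sum>m<M. Tl m) = (\<Sum>n<Suc M. real n * F n) + real M * Tl M"
proof (induction M)
  case 0 then show ?case by (simp add: F0)
next
  case (Suc M)
  have e: "Tl M = Tl (Suc M) + F (Suc M)" unfolding Tl_def by simp
  show ?case using Suc by (simp add: e algebra_simps)
qed

lemma Tl_partial_le: "(\<Sum>m<M. Tl m) \<le> (\<Sum>n. real n * F n)"
proof -
  have s2: "summable (\<lambda>k. real (k + Suc M) * F (k + Suc M))"
    using summable_ignore_initial_segment[OF snF, of "Suc M"] by simp
  have s1: "summable (\<lambda>k. real M * F (k + Suc M))"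
    by (intro summable_mult summable_ignore_initial_segment[OF sF])
  have "real M * Tl M = (\<Sum>k. real M * F (k + Suc M))"
    unfolding Tl_tail by (rule suminf_mult[symmetric]) (rule summable_ignore_initial_segment[OF sF])
  also have "\<dots> \<le> (\<Sum>k. real (k + Suc M) * F (k + Suc M))"
    by (rule suminf_le[OF _ s1 s2]) (intro mult_right_mono Fnn, simp)
  finally have "real M * Tl M \<le> (\<Sum>k. real (k + Suc M) * F (k + Suc M))" .
  moreover have "(\<Sum>n. real n * F n) = (\<Sum>k. real (k + Suc M) * F (k + Suc M)) + (\<Sum>n<Suc M. real n * F n)"
    using suminf_split_initial_segment[OF snF, of "Suc M"] by simp
  ultimately show ?thesis using Tl_partial[of M] by linarith
qed

lemma Tl_summable: "summable Tl"
  by (rule summableI_nonneg_bounded[OF Tl_nonneg Tl_partial_le])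

lemma Tl_div_summable:
  assumes "N > 0" shows "summable (\<lambda>j. Tl (j div N))"
proof (rule summableI_nonneg_bounded[where x = "real N * (\<Sum>n. real n * F n)"])
  show "0 \<le> Tl (j div N)" for j by (rule Tl_nonneg)
  fix K
  have "(\<Sum>j<K. Tl (j div N)) \<le> (\<Sum>j<K*N. Tl (j div N))"
    by (rule sum_mono2) (use assms in \<open>auto intro: Tl_nonneg\<close>)
  also have "\<dots> = real N * (\<Sum>m<K. Tl m)" by (rule sum_div_group[OF assms])
  also have "\<dots> \<le> real N * (\<Sum>n. real n * F n)"
    by (intro mult_left_mono Tl_partial_le) auto
  finally show "(\<Sum>j<K. Tl (j div N)) \<le> real N * (\<Sum>n. real n * F n)" .
qed

end



lemma exec_count_bounds:
  assumes "tau X > 0" "sg t = Some X"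
  shows "1 \<le> exec_count tau sg X t \<and> exec_count tau sg X t \<le> tau X"
proof -
  let ?A = "{u. (t div tau X) * tau X \<le> u \<and> u \<le> t \<and> sg u = Some X}"
  have sub: "?A \<subseteq> {(t div tau X) * tau X..t}" by auto
  have fin: "finite ?A" by (rule finite_subset[OF sub]) simp
  have "t \<in> ?A" using assms by (auto simp: div_times_less_eq_dividend)
  then have "1 \<le> card ?A" using fin by (metis One_nat_def Suc_leI card_gt_0_iff empty_iff)
  moreover have "card ?A \<le> card {(t div tau X) * tau X..t}" by (rule card_mono[OF _ sub]) simp
  moreover have "card {(t div tau X) * tau X..t} = t mod tau X + 1"
    by (simp add: minus_div_mult_eq_mod [symmetric] Suc_diff_le div_times_less_eq_dividend)
  moreover have "t mod tau X < tau X" using assms by simp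
  ultimately show ?thesis unfolding exec_count_def by linarith
qed

lemma slot_nonneg:
  assumes "tau X > 0" "\<forall>i\<in>{1..tau X}. 0 \<le> r X i"
  shows "0 \<le> slot_reward tau r sg X t"
  using exec_count_bounds[of tau X sg t] assms unfolding slot_reward_def by auto

lemma frame_len_pos:
  assumes "finite S" "\<forall>X\<in>S. tau X > 0" shows "frame_len S tau > 0"
proof -
  have f: "finite (tau ` S)" using assms by simp
  have "0 \<notin> tau ` S" using assms by auto
  then have "Lcm (tau ` S) \<noteq> 0" using Lcm_0_iff[OF f] by simp
  then show ?thesis unfolding frame_len_def by simp
qed

context
  fixes S :: "'x set" and tau :: "'x \<Rightarrow> nat" and r :: "'x \<Rightarrow> nat \<Rightarrow> real"
    and qs :: "'x \<Rightarrow> real" and sg :: "nat \<Rightarrow> 'x option" and X :: 'x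
  assumes tpos: "tau X > 0" and rnn: "\<forall>i\<in>{1..tau X}. 0 \<le> r X i"
begin

lemma cum_mono: "t \<le> t' \<Longrightarrow> cum_reward tau r sg X t \<le> cum_reward tau r sg X t'"
  unfolding cum_reward_def
  by (rule sum_mono2) (auto intro: slot_nonneg[of tau X r, OF tpos rnn])

lemma frame_nonneg: "0 \<le> frame_reward S tau r sg X k"
  unfolding frame_reward_def by (rule sum_nonneg) (auto intro: slot_nonneg[of tau X r, OF tpos rnn])

lemma cum_frames: "cum_reward tau r sg X (k * frame_len S tau) = (\<Sum>i\<in>{1..k}. frame_reward S tau r sg X i)"
proof (induction k)
  case 0 then show ?case by (simp add: cum_reward_def)
next
  case (Suc k)
  let ?T = "frame_len S tau"
  have "cum_reward tau r sg X (Suc k * ?T) = cum_reward tau r sg X (k * ?T) + (\<Sum>u\<in>{k*?T..<Suc k * ?T}. slot_reward tau r sg X u)"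
    unfolding cum_reward_def atLeast0LessThan[symmetric]
    by (rule sum.atLeastLessThan_concat[symmetric]) auto
  also have "(\<Sum>u\<in>{k*?T..<Suc k * ?T}. slot_reward tau r sg X u) = frame_reward S tau r sg X (Suc k)"
    unfolding frame_reward_def by simp
  finally show ?case using Suc by simp
qed

lemma debt_nonneg: "0 \<le> debt S tau r qs sg X k"
  by (cases k) auto

lemma frames_ge: "(\<Sum>i\<in>{1..k}. frame_reward S tau r sg X i) \<ge> real k * qs X - debt S tau r qs sg X k"
proof (induction k)
  case 0 then show ?case by simp
next
  case (Suc k)
  have "debt S tau r qs sg X (Suc k) \<ge> debt S tau r qs sg X k + qs X - frame_reward S tau r sg X (Suc k)"
    by simp
  then show ?case using Suc by (simp add: algebra_simps)
qed

lemma debt_inc: "0 \<le> qs X \<Longrightarrow> debt S tau r qs sg X (j + i) \<le> debt S tau r qs sg X j + real i * qs X"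
proof (induction i)
  case 0 then show ?case by simp
next
  case (Suc i)
  have "debt S tau r qs sg X (Suc (j + i)) \<le> max 0 (debt S tau r qs sg X (j+i) + qs X)"
    using frame_nonneg[of "Suc (j+i)"] by simp
  moreover have "0 \<le> debt S tau r qs sg X j + real (Suc i) * qs X"
    using debt_nonneg[of j] Suc.prems by simp
  ultimately show ?case using Suc by (auto simp: algebra_simps)
qed

end


lemma avg_ge:
  fixes S :: "'x set" and tau :: "'x \<Rightarrow> nat" and r :: "'x \<Rightarrow> nat \<Rightarrow> real"
    and qs :: "'x \<Rightarrow> real" and sg :: "nat \<Rightarrow> 'x option" and X :: 'x
  assumes tpos: "tau X > 0" and rnn: "\<forall>i\<in>{1..tau X}. 0 \<le> r X i"
    and Tpos: "frame_len S tau > 0" and qpos: "qs X > 0"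
    and H: "\<And>N. N > 0 \<Longrightarrow> \<exists>K. \<forall>k\<ge>K. debt S tau r qs sg X k \<le> real k * qs X / real N"
  shows "ereal (qs X) \<le> avg_reward S tau r sg X"
  unfolding avg_reward_def le_Liminf_iff
proof (intro allI impI)
  fix y assume y: "y < ereal (qs X)"
  let ?T = "frame_len S tau"
  let ?q = "qs X"
  let ?cum = "cum_reward tau r sg X"
  show "\<forall>\<^sub>F t in sequentially. y < ereal (?cum t / (real t / real ?T))"
  proof (cases y)
    case MInf then show ?thesis by simp
  next
    case PInf then show ?thesis using y by simp
  next
    case (real c)
    with y have c: "c < ?q" by simp
    obtain n where n: "2 * ?q / (?q - c) < real n" using reals_Archimedean2 by blast
    define N where "N = Suc n"
    have Npos: "N > 0" unfolding N_def by simp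
    have NN: "2 * ?q / (?q - c) < real N" using n unfolding N_def by simp
    have "2 * ?q < real N * (?q - c)" using NN c by (simp add: divide_less_eq algebra_simps)
    then have key: "c < ?q - 2 * ?q / real N" using Npos by (simp add: field_simps)
    obtain K where K: "\<forall>k\<ge>K. debt S tau r qs sg X k \<le> real k * ?q / real N"
      using H[OF Npos] by blast
    have "\<forall>t\<ge>(K+N) * ?T. y < ereal (?cum t / (real t / real ?T))"
    proof (intro allI impI)
      fix t assume t: "(K+N) * ?T \<le> t"
      define k where "k = t div ?T"
      have kge: "K + N \<le> k" unfolding k_def using t Tpos
        by (metis div_le_mono nonzero_mult_div_cancel_right not_gr0)
      have tdec: "real t = real k * real ?T + real (t mod ?T)"
        unfolding k_def by (metis of_nat_add of_nat_mult div_mult_mod_eq)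
      have tmod: "real (t mod ?T) < real ?T" using Tpos by simp
      define s where "s = real t / real ?T"
      have s1: "real k \<le> s" unfolding s_def using tdec Tpos by (simp add: field_simps)
      have s2: "s < real k + 1" unfolding s_def using tdec tmod Tpos by (simp add: field_simps)
      have kN: "real N \<le> real k" using kge by simp
      have Nr: "(1::real) \<le> real N" using Npos by simp
      have spos: "0 < s" using s1 kN Nr by linarith
      have "?cum (k * ?T) \<le> ?cum t"
        by (rule cum_mono[where tau=tau and X=X and r=r and sg=sg, OF tpos rnn]) (simp add: k_def div_times_less_eq_dividend)
      moreover have "?cum (k * ?T) \<ge> real k * ?q - debt S tau r qs sg X k"
        using cum_frames[where tau=tau and X=X and r=r and sg=sg and S=S and k=k, OF tpos rnn] frames_ge[where tau=tau and X=X and r=r and sg=sg and S=S and k=k and qs=qs, OF tpos rnn] by simp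
      moreover have "debt S tau r qs sg X k \<le> real k * ?q / real N" using K kge by simp
      ultimately have cumge: "real k * (?q * (1 - 1 / real N)) \<le> ?cum t"
        by (simp add: algebra_simps)
      define A where "A = ?q * (1 - 1 / real N)"
      have A0: "0 \<le> A" unfolding A_def using Nr qpos by (simp add: field_simps)
      define c' where "c' = A * (1 - 1 / real N)"
      have "(real k + 1) * (1 - 1 / real N) \<le> real k"
      proof -
        have "(real k + 1) / real N \<ge> 1" using kN Nr by (simp add: field_simps)
        then show ?thesis by (simp add: algebra_simps)
      qed
      then have "(real k + 1) * c' \<le> real k * A"
        unfolding c'_def using A0 by (metis mult.assoc mult.commute mult_right_mono)
      then have cum2: "(real k + 1) * c' \<le> ?cum t" using cumge unfolding A_def by linarith
      have "c' = ?q - 2 * ?q / real N + ?q / (real N * real N)"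
        unfolding c'_def A_def using Nr by (simp add: field_simps power2_eq_square)
      moreover have "0 \<le> ?q / (real N * real N)" using qpos by simp
      ultimately have cc: "c < c'" using key by linarith
      have cumnn: "0 \<le> ?cum t" unfolding cum_reward_def
        by (rule sum_nonneg) (auto intro: slot_nonneg[of tau X r, OF tpos rnn])
      have "c < ?cum t / s"
      proof (cases "0 \<le> c'")
        case True
        have "c' * s \<le> c' * (real k + 1)" using s2 True by (simp add: mult_left_mono)
        then have "c' * s \<le> ?cum t" using cum2 by (simp add: algebra_simps)
        then have "c' \<le> ?cum t / s" using spos by (simp add: pos_le_divide_eq)
        then show ?thesis using cc by linarith
      next
        case False
        have "0 \<le> ?cum t / s" using cumnn spos by simp
        then show ?thesis using cc False by linarith
      qed
      then show "y < ereal (?cum t / (real t / real ?T))" using real unfolding s_def by simp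
    qed
    then show ?thesis unfolding eventually_sequentially by blast
  qed
qed

lemma excursion:
  fixes z :: "nat \<Rightarrow> 's" and d :: "nat \<Rightarrow> real" and q :: real
  assumes z0: "z 0 = s0" and ret: "\<And>j. z j = s0 \<Longrightarrow> \<exists>j'>j. z j' = s0"
    and fin: "\<And>j. J \<le> j \<Longrightarrow> z j = s0 \<Longrightarrow> \<exists>i\<in>{1..j div N}. z (j+i) = s0"
    and dz: "\<And>j. z j = s0 \<Longrightarrow> d j = 0"
    and dinc: "\<And>j i. d (j+i) \<le> d j + real i * q" and q: "0 \<le> q" and N: "N > 0"
  shows "\<exists>K. \<forall>k\<ge>K. d k \<le> real k * q / real N"
proof -
  have vis: "\<exists>j\<ge>n. z j = s0" for n
  proof (induction n)
    case 0 then show ?case using z0 by blast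
  next
    case (Suc n)
    then obtain j where j: "j \<ge> n" "z j = s0" by blast
    show ?case
    proof (cases "j \<ge> Suc n")
      case True then show ?thesis using j by blast
    next
      case False
      obtain j' where "j' > j" "z j' = s0" using ret[OF j(2)] by blast
      then show ?thesis using False j by (intro exI[of _ j']) auto
    qed
  qed
  obtain j1 where j1: "j1 \<ge> J" "z j1 = s0" using vis by blast
  have "\<forall>k\<ge>j1. d k \<le> real k * q / real N"
  proof (intro allI impI)
    fix k assume k: "j1 \<le> k"
    define P where "P j \<longleftrightarrow> j \<le> k \<and> z j = s0" for j
    define j where "j = (GREATEST j. P j)"
    have Pj: "P j" unfolding j_def by (rule GreatestI_nat[of P j1 k]) (use k j1 in \<open>auto simp: P_def\<close>)
    have jmax: "\<And>j'. P j' \<Longrightarrow> j' \<le> j" unfolding j_def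
      by (rule Greatest_le_nat[of P _ k]) (auto simp: P_def)
    have "j1 \<le> j" using jmax[of j1] k j1 by (auto simp: P_def)
    then obtain i where i: "i \<in> {1..j div N}" "z (j+i) = s0" using fin[of j] j1 Pj by (auto simp: P_def)
    have "k < j + i"
    proof (rule ccontr)
      assume "\<not> k < j + i"
      then have "P (j+i)" using i by (auto simp: P_def)
      then show False using jmax[of "j+i"] i by auto
    qed
    then have "k - j \<le> j div N" using i by auto
    moreover have "j \<le> k" using Pj by (simp add: P_def)
    ultimately have "(k - j) * N \<le> k"
      by (meson div_times_less_eq_dividend le_trans mult_le_mono1)
    then have r1: "real (k - j) * real N \<le> real k" by (metis of_nat_le_iff of_nat_mult)
    have "d k = d (j + (k - j))" using \<open>j \<le> k\<close> by simp
    also have "\<dots> \<le> d j + real (k - j) * q" by (rule dinc)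
    also have "d j = 0" using Pj dz by (simp add: P_def)
    finally have "d k \<le> real (k - j) * q" by simp
    also have "\<dots> \<le> real k * q / real N"
    proof -
      have "real (k - j) \<le> real k / real N" using r1 N by (simp add: field_simps)
      then show ?thesis using q by (metis mult_right_mono times_divide_eq_left)
    qed
    finally show "d k \<le> real k * q / real N" .
  qed
  then show ?thesis by blast
qed



lemma slot_dep:
  assumes "\<forall>v\<le>u. sg v = sg' v"
  shows "slot_reward tau r sg X u = slot_reward tau r sg' X u"
proof -
  have "{v. (u div tau X) * tau X \<le> v \<and> v \<le> u \<and> sg v = Some X} =
        {v. (u div tau X) * tau X \<le> v \<and> v \<le> u \<and> sg' v = Some X}"
    using assms by auto
  then show ?thesis using assms unfolding slot_reward_def exec_count_def by simp
qed

lemma debt_dep: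
  assumes "\<forall>u<k * frame_len S tau. sg u = sg' u"
  shows "debt S tau r qs sg X k = debt S tau r qs sg' X k"
  using assms
proof (induction k)
  case 0 then show ?case by simp
next
  case (Suc k)
  let ?T = "frame_len S tau"
  have kk: "k * ?T \<le> Suc k * ?T" by simp
  have h: "\<forall>u<k * ?T. sg u = sg' u" using Suc.prems kk by auto
  have "frame_reward S tau r sg X (Suc k) = frame_reward S tau r sg' X (Suc k)"
    unfolding frame_reward_def
  proof (rule sum.cong[OF refl])
    fix u assume "u \<in> {(Suc k - 1) * ?T..<Suc k * ?T}"
    then have "\<forall>v\<le>u. sg v = sg' v" using Suc.prems by auto
    then show "slot_reward tau r sg X u = slot_reward tau r sg' X u" by (rule slot_dep)
  qed
  then show ?case using Suc.IH[OF h] by simp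
qed

lemma state_dep:
  assumes "\<forall>u<N. sg u = sg' u" "k * frame_len S tau \<le> N"
  shows "sys_state S tau r qs sg k = sys_state S tau r qs sg' k"
  unfolding sys_state_def using assms
  by (intro restrict_ext debt_dep) auto

lemma cyl_meas:
  fixes sched :: "'w \<Rightarrow> nat \<Rightarrow> 'x option"
  assumes ev: "\<forall>t a. {w\<in>space M. sched w t = a} \<in> sets M"
  shows "{w\<in>space M. \<forall>u<N. sched w u = g u} \<in> sets M"
proof (induction N)
  case 0 then show ?case by simp
next
  case (Suc N)
  have "{w\<in>space M. \<forall>u<Suc N. sched w u = g u} =
        {w\<in>space M. \<forall>u<N. sched w u = g u} \<inter> {w\<in>space M. sched w N = g N}"
    by (auto simp: less_Suc_eq)
  moreover have "{w\<in>space M. sched w N = g N} \<in> sets M" using ev by blast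
  ultimately show ?case using Suc by (metis (no_types, lifting) sets.Int)
qed

lemma meas_fun:
  fixes sched :: "'w \<Rightarrow> nat \<Rightarrow> 'x option"
  assumes vals: "\<forall>w\<in>space M. \<forall>t. set_option (sched w t) \<subseteq> S" and finS: "finite S"
    and ev: "\<forall>t a. {w\<in>space M. sched w t = a} \<in> sets M"
    and dep: "\<And>sg sg'. \<forall>u<N. sg u = sg' u \<Longrightarrow> G sg = G sg'"
  shows "{w\<in>space M. G (sched w) \<in> A} \<in> sets M"
proof -
  define V where "V = insert None (Some ` S)"
  define ext where "ext g = (\<lambda>u. if u < N then g u else None)" for g :: "nat \<Rightarrow> 'x option"
  define Gs where "Gs = {g \<in> {..<N} \<rightarrow>\<^sub>E V. G (ext g) \<in> A}"
  have finGs: "finite Gs" unfolding Gs_def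
    by (rule finite_subset[of _ "{..<N} \<rightarrow>\<^sub>E V"]) (auto intro!: finite_PiE simp: V_def finS)
  have eq: "{w\<in>space M. G (sched w) \<in> A} = (\<Union>g\<in>Gs. {w\<in>space M. \<forall>u<N. sched w u = g u})"
  proof (intro equalityI subsetI)
    fix w assume w: "w \<in> {w\<in>space M. G (sched w) \<in> A}"
    define g where "g = restrict (sched w) {..<N}"
    have "g \<in> {..<N} \<rightarrow>\<^sub>E V"
    proof -
      have "sched w u \<in> V" for u
      proof (cases "sched w u")
        case None then show ?thesis by (simp add: V_def)
      next
        case (Some x)
        have "w \<in> space M" using w by simp
        then have "set_option (sched w u) \<subseteq> S" using vals by blast
        then have "x \<in> S" using Some by simp
        then show ?thesis using Some by (simp add: V_def)
      qed
      then show ?thesis unfolding g_def by auto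
    qed
    moreover have "G (ext g) = G (sched w)" by (rule dep) (auto simp: ext_def g_def)
    ultimately have "g \<in> Gs" using w unfolding Gs_def by auto
    moreover have "\<forall>u<N. sched w u = g u" unfolding g_def by simp
    ultimately show "w \<in> (\<Union>g\<in>Gs. {w\<in>space M. \<forall>u<N. sched w u = g u})" using w by auto
  next
    fix w assume "w \<in> (\<Union>g\<in>Gs. {w\<in>space M. \<forall>u<N. sched w u = g u})"
    then obtain g where g: "g \<in> Gs" "w \<in> space M" "\<forall>u<N. sched w u = g u" by auto
    have "G (sched w) = G (ext g)" by (rule dep) (use g in \<open>auto simp: ext_def\<close>)
    then show "w \<in> {w\<in>space M. G (sched w) \<in> A}" using g unfolding Gs_def by auto
  qed
  show ?thesis unfolding eq
    by (rule sets.finite_UN[OF finGs]) (rule cyl_meas[OF ev])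
qed



locale sysm = prob_space M for M :: "'w measure" +
  fixes S :: "'x set" and tau :: "'x \<Rightarrow> nat" and r :: "'x \<Rightarrow> nat \<Rightarrow> real"
    and qs :: "'x \<Rightarrow> real" and sched :: "'w \<Rightarrow> nat \<Rightarrow> 'x option"
    and p :: "('x \<Rightarrow> real) \<Rightarrow> ('x \<Rightarrow> real) pmf"
  assumes finS: "finite S"
    and vals: "\<forall>w\<in>space M. \<forall>t. set_option (sched w t) \<subseteq> S"
    and ev: "\<forall>t a. {w\<in>space M. sched w t = a} \<in> sets M"
    and mc: "markov_chain_with M (\<lambda>w k. sys_state S tau r qs (sched w) k) p"
begin

definition Z where "Z w k = sys_state S tau r qs (sched w) k"
definition s0 :: "'x \<Rightarrow> real" where "s0 = (\<lambda>X\<in>S. 0)"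
definition Hist where "Hist k w = map (Z w) [0..<Suc k]"
definition nu where "nu k = map_pmf (\<lambda>ys. s0 # ys) (walk p k s0)"

lemma Z0: "Z w 0 = s0"
  unfolding Z_def s0_def sys_state_def by simp

lemma Hist_meas: "{w\<in>space M. Hist k w \<in> A} \<in> sets M"
proof -
  have "{w\<in>space M. (\<lambda>sg. map (\<lambda>i. sys_state S tau r qs sg i) [0..<Suc k]) (sched w) \<in> A} \<in> sets M"
  proof (rule meas_fun[OF vals finS ev])
    fix sg sg' :: "nat \<Rightarrow> 'x option"
    assume h: "\<forall>u<k * frame_len S tau. sg u = sg' u"
    show "map (\<lambda>i. sys_state S tau r qs sg i) [0..<Suc k] = map (\<lambda>i. sys_state S tau r qs sg' i) [0..<Suc k]"
    proof (rule map_cong[OF refl])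
      fix i assume "i \<in> set [0..<Suc k]"
      then have "i < Suc k" by (simp del: upt_Suc)
      then have "i \<le> k" by linarith
      then have "i * frame_len S tau \<le> k * frame_len S tau" by (rule mult_le_mono1)
      then show "sys_state S tau r qs sg i = sys_state S tau r qs sg' i"
        by (rule state_dep[OF h])
    qed
  qed
  then show ?thesis unfolding Hist_def Z_def by simp
qed

lemma Hist_measurable: "Hist k \<in> measurable M (count_space UNIV)"
proof (rule measurableI)
  fix A :: "('x \<Rightarrow> real) list set"
  have "Hist k -` A \<inter> space M = {w\<in>space M. Hist k w \<in> A}" by auto
  then show "Hist k -` A \<inter> space M \<in> sets M" using Hist_meas by simp
qed simp

lemma Hist_len: "length (Hist k w) = Suc k"
  unfolding Hist_def by simp

lemma Hist_eq_iff: "length xs = Suc k \<Longrightarrow> Hist k w = xs \<longleftrightarrow> (\<forall>i\<le>k. Z w i = xs!i)"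
  unfolding Hist_def by (auto simp: list_eq_iff_nth_eq less_Suc_eq_le simp del: upt_Suc)

lemma Hist_Suc: "Hist (Suc k) w = Hist k w @ [Z w (Suc k)]"
  unfolding Hist_def by simp

lemma nu_Suc: "nu (Suc k) = bind_pmf (nu k) (\<lambda>xs. map_pmf (\<lambda>y. xs @ [y]) (p (last xs)))"
proof -
  have w1: "walk p 1 y = map_pmf (\<lambda>y'. [y']) (p y)" for y
    by (simp add: map_pmf_def bind_return_pmf)
  have ws: "walk p (Suc k) s0 = bind_pmf (walk p k s0) (\<lambda>ys. map_pmf (\<lambda>zs. ys @ zs) (walk p 1 (last (s0 # ys))))"
    unfolding Suc_eq_plus1 by (rule walk_add)
  show ?thesis
    unfolding nu_def ws w1
    by (simp add: map_bind_pmf bind_map_pmf map_pmf_comp del: walk.simps)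
qed

lemma nu_len: "xs \<in> set_pmf (nu k) \<Longrightarrow> length xs = Suc k"
  unfolding nu_def by (auto dest: walk_length)

lemma point: "measure M {w\<in>space M. Hist k w = xs} = pmf (nu k) xs"
proof (induction k arbitrary: xs)
  case 0
  have "Hist 0 w = [s0]" for w unfolding Hist_def by (simp add: Z0)
  moreover have "nu 0 = return_pmf [s0]" unfolding nu_def by simp
  ultimately show ?case by (cases "xs = [s0]") (auto simp: prob_space)
next
  case (Suc k)
  show ?case
  proof (cases "length xs = Suc (Suc k)")
    case False
    have e: "{w\<in>space M. Hist (Suc k) w = xs} = {}" using False Hist_len by auto
    have "xs \<notin> set_pmf (nu (Suc k))" using False nu_len by blast
    then show ?thesis unfolding e by (simp add: set_pmf_iff)
  next
    case True
    define ys where "ys = butlast xs"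
    define y where "y = last xs"
    have xs: "xs = ys @ [y]" using True unfolding ys_def y_def by (cases xs rule: rev_cases) auto
    have lys: "length ys = Suc k" using True xs by simp
    have "{w\<in>space M. Hist (Suc k) w = xs} =
        {w\<in>space M. (\<forall>i\<le>k. sys_state S tau r qs (sched w) i = ys!i) \<and> sys_state S tau r qs (sched w) (Suc k) = y}"
      unfolding xs Hist_Suc using Hist_eq_iff[OF lys] Hist_len by (auto simp: Z_def)
    also have "measure M \<dots> = measure M {w\<in>space M. \<forall>i\<le>k. sys_state S tau r qs (sched w) i = ys!i} * pmf (p (last ys)) y"
      using mc lys unfolding markov_chain_with_def by blast
    also have "{w\<in>space M. \<forall>i\<le>k. sys_state S tau r qs (sched w) i = ys!i} = {w\<in>space M. Hist k w = ys}"
      using Hist_eq_iff[OF lys] by (auto simp: Z_def)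
    also have "measure M \<dots> = pmf (nu k) ys" by (rule Suc.IH)
    also have "pmf (nu k) ys * pmf (p (last ys)) y = pmf (nu (Suc k)) xs"
    proof -
      have "pmf (nu (Suc k)) xs = (\<integral>x. pmf (map_pmf (\<lambda>y'. x @ [y']) (p (last x))) xs \<partial>measure_pmf (nu k))"
        unfolding nu_Suc pmf_bind ..
      also have "\<dots> = (\<integral>x. pmf (p (last ys)) y * indicator {ys} x \<partial>measure_pmf (nu k))"
      proof (rule Bochner_Integration.integral_cong[OF refl])
        fix x
        show "pmf (map_pmf (\<lambda>y'. x @ [y']) (p (last x))) xs = pmf (p (last ys)) y * indicator {ys} x"
        proof (cases "x = ys")
          case True
          have "inj (\<lambda>y'. ys @ [y'])" by (auto simp: inj_def)
          then show ?thesis using True pmf_map_inj'[of "\<lambda>y'. ys @ [y']" "p (last ys)" y] xs by simp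
        next
          case False
          have "xs \<notin> (\<lambda>y'. x @ [y']) ` set_pmf (p (last x))" using False xs by auto
          then show ?thesis using False by (simp add: pmf_map_outside)
        qed
      qed
      also have "\<dots> = pmf (p (last ys)) y * pmf (nu k) ys"
        by (simp add: measure_pmf_single)
      finally show ?thesis by simp
    qed
    finally show ?thesis .
  qed
qed

end


context sysm begin

lemma Hist_meas1: "{w\<in>space M. Hist k w = xs} \<in> sets M"
  using Hist_meas[of k "{xs}"] by simp

lemma Hist_full: "AE w in M. Hist k w \<in> set_pmf (nu k)"
proof -
  let ?\<Omega> = "set_pmf (nu k)"
  let ?A = "{w\<in>space M. Hist k w \<in> ?\<Omega>}"
  have eqU: "?A = (\<Union>xs\<in>?\<Omega>. {w\<in>space M. Hist k w = xs})" by auto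
  have "emeasure M ?A = (\<integral>\<^sup>+xs. emeasure M {w\<in>space M. Hist k w = xs} \<partial>count_space ?\<Omega>)"
    unfolding eqU
    by (rule emeasure_UN_countable) (auto simp: disjoint_family_on_def Hist_meas1)
  also have "\<dots> = (\<integral>\<^sup>+xs. emeasure (measure_pmf (nu k)) {xs} \<partial>count_space ?\<Omega>)"
    by (intro nn_integral_cong) (simp add: emeasure_eq_measure point emeasure_pmf_single)
  also have "\<dots> = emeasure (measure_pmf (nu k)) ?\<Omega>"
    by (rule emeasure_countable_singleton[symmetric]) auto
  also have "\<dots> = 1" by (simp add: emeasure_pmf)
  finally have "prob ?A = 1" by (simp add: emeasure_eq_measure)
  then have "AE w in M. w \<in> ?A" using AE_in_set_eq_1[of ?A] Hist_meas by simp
  then show ?thesis by eventually_elim auto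
qed

lemma Hist_distr: "distr M (count_space UNIV) (Hist k) = measure_pmf (nu k)"
proof (rule measure_eqI_countable_AE[where \<Omega> = "set_pmf (nu k)"])
  show "AE x in distr M (count_space UNIV) (Hist k). x \<in> set_pmf (nu k)"
    by (subst AE_distr_iff[OF Hist_measurable]) (auto simp: Hist_full)
  show "AE x in measure_pmf (nu k). x \<in> set_pmf (nu k)" by (rule AE_measure_pmf)
  fix x
  have "Hist k -` {x} \<inter> space M = {w\<in>space M. Hist k w = x}" by auto
  then show "emeasure (distr M (count_space UNIV) (Hist k)) {x} = emeasure (measure_pmf (nu k)) {x}"
    by (simp add: emeasure_distr[OF Hist_measurable] emeasure_eq_measure point emeasure_pmf_single)
qed auto

lemma prob_Hist: "measure M {w\<in>space M. Hist k w \<in> A} = measure_pmf.prob (nu k) A"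
proof -
  have "Hist k -` A \<inter> space M = {w\<in>space M. Hist k w \<in> A}" by auto
  then show ?thesis
    using measure_distr[OF Hist_measurable, of A] Hist_distr by simp
qed

lemma avoid_prob:
  "measure_pmf.prob (nu (j+m)) {xs. xs!j = s0 \<and> (\<forall>i\<in>{1..m}. xs!(j+i) \<noteq> s0)}
     \<le> 1 - (\<Sum>n<Suc m. first_passage p s0 n s0)"
proof -
  let ?B = "{xs. xs!j = s0 \<and> (\<forall>i\<in>{1..m}. xs!(j+i) \<noteq> s0)}"
  let ?C = "{zs. \<forall>i<m. zs!i \<noteq> s0}"
  let ?f = "\<lambda>ys. measure_pmf.prob (walk p m (last (s0 # ys))) ((\<lambda>zs. ys @ zs) -` (\<lambda>ys. s0 # ys) -` ?B)"
  have "measure_pmf.prob (nu (j+m)) ?B = (\<integral>ys. ?f ys \<partial>measure_pmf (walk p j s0))"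
    unfolding nu_def walk_add measure_map_pmf measure_bind_pmf_eq by simp
  also have "\<dots> \<le> (\<integral>ys. measure_pmf.prob (walk p m s0) ?C \<partial>measure_pmf (walk p j s0))"
  proof (rule integral_mono_AE)
    show "integrable (measure_pmf (walk p j s0)) ?f"
      by (rule pmf_integrable_bdd[where B=1]) simp
    show "integrable (measure_pmf (walk p j s0)) (\<lambda>ys. measure_pmf.prob (walk p m s0) ?C)"
      by simp
    show "AE ys in measure_pmf (walk p j s0). ?f ys \<le> measure_pmf.prob (walk p m s0) ?C"
      unfolding AE_measure_pmf_iff
    proof
      fix ys assume "ys \<in> set_pmf (walk p j s0)"
      then have ly: "length ys = j" by (rule walk_length)
      have n1: "(s0 # ys @ zs) ! j = last (s0 # ys)" for zs
      proof -
        have "(s0 # ys @ zs) ! j = ((s0 # ys) @ zs) ! j" by simp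
        also have "\<dots> = (s0 # ys) ! j" using ly by (simp only: nth_append) simp
        also have "\<dots> = last (s0 # ys)"
        proof -
          have "last (s0#ys) = (s0#ys) ! (length (s0#ys) - 1)" by (rule last_conv_nth) simp
          moreover have "length (s0#ys) - 1 = j" using ly by simp
          ultimately show ?thesis by simp
        qed
        finally show ?thesis .
      qed
      have n2: "(s0 # ys @ zs) ! (j + Suc i) = zs ! i" for zs i
      proof -
        have "(s0 # ys @ zs) ! (j + Suc i) = ((s0 # ys) @ zs) ! (length (s0 # ys) + i)" using ly by simp
        also have "\<dots> = zs ! i" by (rule nth_append_length_plus)
        finally show ?thesis .
      qed
      show "?f ys \<le> measure_pmf.prob (walk p m s0) ?C"
      proof (cases "last (s0 # ys) = s0")
        case False
        have e: "(\<lambda>zs. ys @ zs) -` (\<lambda>ys. s0 # ys) -` ?B = {}" using n1 False by auto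
        show ?thesis unfolding e by simp
      next
        case True
        have "(\<lambda>zs. ys @ zs) -` (\<lambda>ys. s0 # ys) -` ?B \<subseteq> ?C"
        proof
          fix zs assume "zs \<in> (\<lambda>zs. ys @ zs) -` (\<lambda>ys. s0 # ys) -` ?B"
          then have h: "\<forall>i\<in>{1..m}. (s0 # ys @ zs) ! (j+i) \<noteq> s0" by simp
          show "zs \<in> ?C"
          proof (simp, intro allI impI)
            fix i assume "i < m"
            then have "Suc i \<in> {1..m}" by simp
            then show "zs ! i \<noteq> s0" using h n2[of zs i] by metis
          qed
        qed
        then have "measure_pmf.prob (walk p m s0) ((\<lambda>zs. ys @ zs) -` (\<lambda>ys. s0 # ys) -` ?B)
            \<le> measure_pmf.prob (walk p m s0) ?C"
          by (rule measure_pmf.finite_measure_mono) simp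
        then show ?thesis unfolding True .
      qed
    qed
  qed
  also have "\<dots> = measure_pmf.prob (walk p m s0) ?C" by simp
  also have "\<dots> = 1 - (\<Sum>n<Suc m. first_passage p s0 n s0)" by (rule avoid_walk)
  finally show ?thesis .
qed

end


context sysm begin

definition Ev where "Ev j m = {w\<in>space M. Z w j = s0 \<and> (\<forall>i\<in>{1..m}. Z w (j+i) \<noteq> s0)}"

lemma Ev_Hist: "Ev j m = {w\<in>space M. Hist (j+m) w \<in> {xs. xs!j = s0 \<and> (\<forall>i\<in>{1..m}. xs!(j+i) \<noteq> s0)}}"
proof -
  have "Hist (j+m) w ! i = Z w i" if "i \<le> j + m" for w i
    unfolding Hist_def using that by (simp del: upt_Suc add: nth_map)
  then show ?thesis unfolding Ev_def by auto
qed

lemma Ev_meas: "Ev j m \<in> sets M"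
  unfolding Ev_Hist by (rule Hist_meas)

lemma Ev_prob: "measure M (Ev j m) \<le> 1 - (\<Sum>n<Suc m. first_passage p s0 n s0)"
  unfolding Ev_Hist prob_Hist by (rule avoid_prob)

lemma main:
  assumes pr: "positive_recurrent p s0"
    and tpos: "\<forall>X\<in>S. tau X > 0"
    and rnn: "\<forall>X\<in>S. \<forall>i\<in>{1..tau X}. 0 \<le> r X i"
    and qpos: "\<forall>X\<in>S. qs X > 0"
  shows "\<forall>X\<in>S. AE w in M. avg_reward S tau r (sched w) X \<ge> ereal (qs X)"
proof -
  interpret F: pr_setup "\<lambda>n. first_passage p s0 n s0"
    using pr unfolding positive_recurrent_def
    by unfold_locales (auto simp: fp_bounds)
  have Evb: "measure M (Ev j m) \<le> F.Tl m" for j m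
    unfolding F.Tl_def by (rule Ev_prob)
  have a: "AE w in M. \<forall>j. Z w j = s0 \<longrightarrow> (\<exists>j'>j. Z w j' = s0)"
  proof (rule AE_all_countable[THEN iffD2], intro allI)
    fix j
    define R where "R = (\<Inter>m\<in>UNIV. Ev j m)"
    have Rm: "R \<in> sets M" unfolding R_def
      by (rule sets.countable_INT) (use Ev_meas in blast, simp)
    have "measure M R \<le> 0"
    proof (rule LIMSEQ_le_const[OF F.Tl_lim])
      show "\<exists>N. \<forall>n\<ge>N. measure M R \<le> F.Tl n"
      proof (intro exI allI impI)
        fix n
        have "measure M R \<le> measure M (Ev j n)"
          by (rule finite_measure_mono) (unfold R_def, blast, rule Ev_meas)
        then show "measure M R \<le> F.Tl n" using Evb[of j n] by linarith
      qed
    qed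
    then have "measure M R = 0" using measure_nonneg[of M R] by linarith
    then have "emeasure M R = 0" by (simp add: emeasure_eq_measure)
    then have "R \<in> null_sets M" using Rm by (simp add: null_sets_def)
    then have "AE w in M. w \<notin> R" by (rule AE_not_in)
    from this AE_space show "AE w in M. Z w j = s0 \<longrightarrow> (\<exists>j'>j. Z w j' = s0)"
    proof (eventually_elim, intro impI)
      fix w assume w: "w \<notin> R" "w \<in> space M" "Z w j = s0"
      then obtain m where "w \<notin> Ev j m" unfolding R_def by blast
      then obtain i where "i \<in> {1..m}" "Z w (j+i) = s0" using w unfolding Ev_def by blast
      then show "\<exists>j'>j. Z w j' = s0" by (intro exI[of _ "j+i"]) simp
    qed
  qed
  have b: "AE w in M. \<forall>N. N > 0 \<longrightarrow> eventually (\<lambda>j. w \<in> space M - Ev j (j div N)) sequentially"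
  proof (rule AE_all_countable[THEN iffD2], intro allI)
    fix N :: nat
    show "AE w in M. N > 0 \<longrightarrow> eventually (\<lambda>j. w \<in> space M - Ev j (j div N)) sequentially"
    proof (cases "N > 0")
      case False then show ?thesis by simp
    next
      case True
      have "summable (\<lambda>j. measure M (Ev j (j div N)))"
      proof (rule summable_comparison_test[OF _ F.Tl_div_summable[OF True]])
        show "\<exists>N'. \<forall>n\<ge>N'. norm (measure M (Ev n (n div N))) \<le> F.Tl (n div N)"
        proof (intro exI[of _ 0] allI impI)
          fix n :: nat
          show "norm (measure M (Ev n (n div N))) \<le> F.Tl (n div N)"
            using Evb[of n "n div N"] by simp
        qed
      qed
      then have "AE w in M. eventually (\<lambda>j. w \<in> space M - Ev j (j div N)) sequentially"
        by (intro borel_cantelli_AE1 Ev_meas) (simp_all add: less_top[symmetric])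
      then show ?thesis by (rule eventually_mono) simp
    qed
  qed
  show ?thesis
  proof
    fix X assume X: "X \<in> S"
    have tX: "tau X > 0" and rX: "\<forall>i\<in>{1..tau X}. 0 \<le> r X i" and qX: "qs X > 0"
      using X tpos rnn qpos by auto
    have Tpos: "frame_len S tau > 0" by (rule frame_len_pos[OF finS tpos])
    from a b show "AE w in M. avg_reward S tau r (sched w) X \<ge> ereal (qs X)"
    proof (eventually_elim)
      case (elim w)
      show ?case
      proof (rule avg_ge[where tau=tau and X=X and r=r and S=S and qs=qs, OF tX rX Tpos qX])
        fix N :: nat assume N: "N > 0"
        obtain J where J: "\<forall>j\<ge>J. w \<in> space M - Ev j (j div N)"
          using elim(2) N unfolding eventually_sequentially by blast
        show "\<exists>K. \<forall>k\<ge>K. debt S tau r qs (sched w) X k \<le> real k * qs X / real N"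
        proof (rule excursion[where z = "Z w" and J = J])
          show "Z w 0 = s0" by (rule Z0)
          show "\<And>j. Z w j = s0 \<Longrightarrow> \<exists>j'>j. Z w j' = s0" using elim(1) by blast
          show "\<exists>i\<in>{1..j div N}. Z w (j + i) = s0" if "J \<le> j" "Z w j = s0" for j
            using J that unfolding Ev_def by auto
          show "debt S tau r qs (sched w) X j = 0" if "Z w j = s0" for j
          proof -
            have "Z w j X = s0 X" using that by simp
            then show ?thesis using X unfolding Z_def sys_state_def s0_def by simp
          qed
          show "debt S tau r qs (sched w) X (j + i) \<le> debt S tau r qs (sched w) X j + real i * qs X" for j i
            by (rule debt_inc[where tau=tau and X=X and r=r, OF tX rX]) (use qX in simp)
        qed (use qX N in auto)
      qed
    qed
  qed
qed

end

theorem lemma3: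
  fixes M :: "'w measure"
    and S :: "'x set"
    and tau :: "'x \<Rightarrow> nat"
    and r :: "'x \<Rightarrow> nat \<Rightarrow> real"
    and qs :: "'x \<Rightarrow> real"
    and sched :: "'w \<Rightarrow> nat \<Rightarrow> 'x option"
    and p :: "('x \<Rightarrow> real) \<Rightarrow> ('x \<Rightarrow> real) pmf"
  assumes "prob_space M"
    and "finite S"
    and "\<forall>X\<in>S. tau X > 0"
    and "\<forall>X\<in>S. \<forall>i. 1 \<le> i \<and> i < tau X \<longrightarrow> r X (Suc i) \<le> r X i"
    and "\<forall>X\<in>S. \<forall>i\<in>{1..tau X}. 0 \<le> r X i"
    and "\<forall>X\<in>S. qs X > 0"
    and "\<forall>w\<in>space M. \<forall>t. set_option (sched w t) \<subseteq> S"
    and "\<forall>t a. {w\<in>space M. sched w t = a} \<in> sets M"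
    and "markov_chain_with M (\<lambda>w k. sys_state S tau r qs (sched w) k) p"
    and "irreducible_on p (reachable_states p (\<lambda>X\<in>S. 0))"
    and "positive_recurrent_on p (reachable_states p (\<lambda>X\<in>S. 0))"
  shows "\<forall>X\<in>S. AE w in M. avg_reward S tau r (sched w) X \<ge> ereal (qs X)"
proof -
  interpret sysm M S tau r qs sched p
    using assms(1,2,7,8,9) by (simp add: sysm_def sysm_axioms_def)
  have "(\<lambda>X\<in>S. 0) \<in> reachable_states p (\<lambda>X\<in>S. 0)"
    unfolding reachable_states_def by (intro CollectI exI[of _ 0]) simp
  then have "positive_recurrent p s0"
    using assms(11) unfolding positive_recurrent_on_def s0_def by blast
  then show ?thesis using main assms(3,5,6) by blast
qed


end
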